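(* Let $a$ be a real number that is algebraic over $\mathbb{Q}$, and let $\mathbb{Q}(a)^+=\{x\in\mathbb{Q}(a): x>0\}$. Then $\mathbb{Q}(a)^+$ cannot be written as $H_1\sqcup H_2$ with $H_1,H_2$ disjoint nonempty subsets, each closed under addition and multiplication. *)

theory Defs
  imports Complex_Main "HOL-Computational_Algebra.Polynomial"
begin

definition real_subfield :: "real set \<Rightarrow> bool" where
  "real_subfield S \<longleftrightarrow> 0 \<in> S \<and> 1 \<in> S \<and>
     (\<forall>x\<in>S. \<forall>y\<in>S. x + y \<in> S \<and> x - y \<in> S \<and> x * y \<in> S) \<and>
     (\<forall>x\<in>S. x \<noteq> 0 \<longrightarrow> inverse x \<in> S)"

definition rat_adjoin :: "real \<Rightarrow> real set" where
  "rat_adjoin a = \<Inter>{S. real_subfield S \<and> a \<in> S}"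

definition add_mult_closed :: "real set \<Rightarrow> bool" where
  "add_mult_closed H \<longleftrightarrow> (\<forall>x\<in>H. \<forall>y\<in>H. x + y \<in> H \<and> x * y \<in> H)"

end

theory Submission
  imports Defs "HOL-Computational_Algebra.Polynomial_Factorial" "HOL-Computational_Algebra.Field_as_Ring"
begin

lemma rsD:
  assumes "real_subfield S"
  shows "0 \<in> S" "1 \<in> S" "x \<in> S \<Longrightarrow> y \<in> S \<Longrightarrow> x + y \<in> S"
    "x \<in> S \<Longrightarrow> y \<in> S \<Longrightarrow> x - y \<in> S" "x \<in> S \<Longrightarrow> y \<in> S \<Longrightarrow> x * y \<in> S"
    "x \<in> S \<Longrightarrow> x \<noteq> 0 \<Longrightarrow> inverse x \<in> S"
  using assms unfolding real_subfield_def by auto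

lemma rs_uminus: "real_subfield S \<Longrightarrow> x \<in> S \<Longrightarrow> - x \<in> S"
  using rsD(4)[of S 0 x] rsD(1)[of S] by simp

lemma rs_divide: "real_subfield S \<Longrightarrow> x \<in> S \<Longrightarrow> y \<in> S \<Longrightarrow> x / y \<in> S"
  by (cases "y = 0") (auto simp: divide_inverse intro: rsD)

lemma rs_nat: "real_subfield S \<Longrightarrow> real n \<in> S"
  by (induction n) (auto intro: rsD)

lemma rs_int: "real_subfield S \<Longrightarrow> real_of_int k \<in> S"
proof (cases "k \<ge> 0")
  case True
  assume "real_subfield S"
  then show ?thesis using rs_nat[of S "nat k"] True by simp
next
  case False
  assume "real_subfield S"
  then show ?thesis using rs_uminus[OF _ rs_nat[of S "nat (-k)"]] False by simp
qed

lemma rs_Rats: "real_subfield S \<Longrightarrow> q \<in> \<rat> \<Longrightarrow> q \<in> S"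
  by (auto elim!: Rats_cases' intro!: rs_divide rs_int)

lemma rs_power: "real_subfield S \<Longrightarrow> x \<in> S \<Longrightarrow> x ^ k \<in> S"
  by (induction k) (auto intro: rsD)

lemma rat_adjoin_sf: "real_subfield (rat_adjoin a)"
  unfolding rat_adjoin_def real_subfield_def by auto

lemma rat_adjoin_a: "a \<in> rat_adjoin a"
  unfolding rat_adjoin_def by auto

lemma rat_adjoin_least: "real_subfield S \<Longrightarrow> a \<in> S \<Longrightarrow> rat_adjoin a \<subseteq> S"
  unfolding rat_adjoin_def by auto

definition ev :: "real \<Rightarrow> rat poly \<Rightarrow> real" where
  "ev a p = poly (map_poly of_rat p) a"

lemma map_poly_of_rat_add: "map_poly (of_rat :: rat \<Rightarrow> real) (p + q) = map_poly of_rat p + map_poly of_rat q"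
  by (rule poly_eqI) (simp add: coeff_map_poly of_rat_add)

lemma map_poly_of_rat_mult: "map_poly (of_rat :: rat \<Rightarrow> real) (p * q) = map_poly of_rat p * map_poly of_rat q"
  by (rule poly_eqI) (simp add: coeff_map_poly coeff_mult of_rat_sum of_rat_mult)

lemma ev_add [simp]: "ev a (p + q) = ev a p + ev a q"
  by (simp add: ev_def map_poly_of_rat_add)

lemma ev_mult [simp]: "ev a (p * q) = ev a p * ev a q"
  by (simp add: ev_def map_poly_of_rat_mult)

lemma ev_pCons [simp]: "ev a (pCons c p) = of_rat c + a * ev a p"
  by (simp add: ev_def map_poly_pCons)

lemma ev_0 [simp]: "ev a 0 = 0"
  by (simp add: ev_def)

lemma ev_const [simp]: "ev a [:c:] = of_rat c"
  using ev_pCons[of a c 0] by simp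

lemma ev_1 [simp]: "ev a 1 = 1"
  by (simp add: ev_def)

lemma ev_smult [simp]: "ev a (smult c p) = of_rat c * ev a p"
  by (simp add: ev_def map_poly_smult of_rat_mult)

lemma ev_minus [simp]: "ev a (p - q) = ev a p - ev a q"
proof -
  have "ev a (p - q) + ev a q = ev a p" by (metis ev_add diff_add_cancel)
  then show ?thesis by simp
qed

lemma ev_X: "ev a [:0, 1:] = a"
  by simp

lemma ev_in_sf: "real_subfield S \<Longrightarrow> a \<in> S \<Longrightarrow> ev a p \<in> S"
proof (induction p)
  case 0
  then show ?case by (simp add: rsD)
next
  case (pCons c p)
  then have S: "real_subfield S" "a \<in> S" "ev a p \<in> S" by auto
  have "of_rat c \<in> S" using rs_Rats[OF S(1)] by simp
  moreover have "a * ev a p \<in> S" using rsD(5)[OF S(1) S(2) S(3)] .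
  ultimately have "of_rat c + a * ev a p \<in> S" using rsD(3)[OF S(1)] by blast
  then show ?case by simp
qed

lemma ev_mod: "ev a f = 0 \<Longrightarrow> ev a (p mod f) = ev a p"
proof -
  assume "ev a f = 0"
  have "ev a p = ev a ((p div f) * f + p mod f)" by simp
  also have "\<dots> = ev a (p div f) * ev a f + ev a (p mod f)" by (simp only: ev_add ev_mult)
  finally have "ev a p = ev a (p div f) * ev a f + ev a (p mod f)" .
  with \<open>ev a f = 0\<close> show ?thesis by simp
qed

lemma ev_sum_lt:
  assumes "degree p < n"
  shows "ev a p = (\<Sum>i<n. of_rat (coeff p i) * a ^ i)"
proof -
  have deg: "degree (map_poly (of_rat :: rat \<Rightarrow> real) p) = degree p"
    by (rule degree_map_poly) simp
  have "ev a p = (\<Sum>i\<le>degree p. of_rat (coeff p i) * a ^ i)"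
    unfolding ev_def poly_altdef deg by (simp add: coeff_map_poly)
  also have "\<dots> = (\<Sum>i<n. of_rat (coeff p i) * a ^ i)"
    using assms by (intro sum.mono_neutral_left) (auto simp: coeff_eq_0)
  finally show ?thesis .
qed

lemma ev_pderiv_pCons: "ev a (pderiv (pCons c p)) = ev a p + a * ev a (pderiv p)"
  by (simp add: pderiv_pCons)

section \<open>Minimal polynomial and the field Q(a) = Q[a]\<close>

lemma minpoly_exists:
  assumes "algebraic a"
  obtains f :: "rat poly" where "f \<noteq> 0" "ev a f = 0"
    "\<And>g. g \<noteq> 0 \<Longrightarrow> ev a g = 0 \<Longrightarrow> degree f \<le> degree g"
proof -
  from assms obtain P :: "real poly" where P: "\<forall>i. coeff P i \<in> \<rat>" "P \<noteq> 0" "poly P a = 0"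
    by (auto simp: algebraic_altdef)
  then obtain p where p: "P = map_poly of_rat p" using ratpolyE[of P] by metis
  have "p \<noteq> 0" using P(2) p by auto
  moreover have "ev a p = 0" using P(3) p by (simp add: ev_def)
  ultimately have "\<exists>x. (x \<noteq> 0 \<and> ev a x = 0) \<and> (\<forall>y. (y \<noteq> 0 \<and> ev a y = 0) \<longrightarrow> degree x \<le> degree y)"
    by (intro ex_has_least_nat[of "\<lambda>g. g \<noteq> 0 \<and> ev a g = 0" p degree]) auto
  then show ?thesis using that by blast
qed

locale minpoly =
  fixes a :: real and f :: "rat poly"
  assumes f_nz: "f \<noteq> 0" and f_root: "ev a f = 0"
    and f_min: "\<And>g. g \<noteq> 0 \<Longrightarrow> ev a g = 0 \<Longrightarrow> degree f \<le> degree g"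
begin

lemma deg_pos: "degree f > 0"
proof (rule ccontr)
  assume "\<not> degree f > 0"
  then have "degree f = 0" by simp
  then obtain c0 where c0: "f = [:c0:]" by (elim degree_eq_zeroE)
  then have "ev a f = of_rat c0" by simp
  moreover have "c0 \<noteq> 0" using c0 f_nz by auto
  ultimately show False using f_root by simp
qed

lemma pderiv_nz: "ev a (pderiv f) \<noteq> 0"
proof
  assume h: "ev a (pderiv f) = 0"
  have "pderiv f \<noteq> 0" using deg_pos by (simp add: pderiv_eq_0_iff)
  then have "degree f \<le> degree (pderiv f)" using f_min h by blast
  moreover have "degree (pderiv f) < degree f" using deg_pos by (simp add: degree_pderiv)
  ultimately show False by simp
qed

lemma ev_inverse:
  assumes "ev a p \<noteq> 0"
  shows "\<exists>q. ev a q = inverse (ev a p)"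
proof -
  define g where "g = gcd p f"
  have "g dvd f" unfolding g_def by simp
  then obtain h where fh: "f = g * h" by (elim dvdE)
  have gnz: "g \<noteq> 0" and hnz: "h \<noteq> 0" using fh f_nz by auto
  have "g dvd p" unfolding g_def by simp
  then obtain k where pk: "p = g * k" by (elim dvdE)
  have evg: "ev a g \<noteq> 0" using assms pk by auto
  have "ev a g * ev a h = 0" using f_root unfolding fh ev_mult .
  then have "ev a h = 0" using evg by simp
  then have "degree f \<le> degree h" using f_min hnz by blast
  moreover have "degree f = degree g + degree h" using fh gnz hnz by (simp add: degree_mult_eq)
  ultimately have "degree g = 0" by simp
  then obtain c where gc: "g = [:c:]" by (elim degree_eq_zeroE)
  have "c \<noteq> 0" using gc gnz by auto
  define u where "u = fst (bezout_coefficients p f)"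
  define v where "v = snd (bezout_coefficients p f)"
  have "u * p + v * f = g" unfolding u_def v_def g_def by (rule bezout_coefficients_fst_snd)
  then have "ev a (u * p + v * f) = ev a g" by simp
  then have "ev a u * ev a p + ev a v * ev a f = ev a g" by (simp only: ev_add ev_mult)
  then have "ev a u * ev a p = of_rat c" using f_root gc by simp
  note eq = this
  have "ev a p * ev a (smult (inverse c) u) = of_rat (inverse c) * (ev a u * ev a p)"
    by (simp add: ev_smult algebra_simps)
  also have "\<dots> = of_rat (inverse c * c)" using eq by (simp add: of_rat_mult)
  also have "\<dots> = 1" using \<open>c \<noteq> 0\<close> by simp
  finally have "ev a (smult (inverse c) u) = inverse (ev a p)"
    by (rule inverse_unique[symmetric])
  then show ?thesis by blast
qed

lemma range_ev_sf: "real_subfield (range (ev a))"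
proof -
  have A: "\<And>p q. ev a p + ev a q \<in> range (ev a)" by (metis ev_add rangeI)
  have B: "\<And>p q. ev a p - ev a q \<in> range (ev a)" by (metis ev_minus rangeI)
  have C: "\<And>p q. ev a p * ev a q \<in> range (ev a)" by (metis ev_mult rangeI)
  have D: "\<And>p. ev a p \<noteq> 0 \<Longrightarrow> inverse (ev a p) \<in> range (ev a)" using ev_inverse by (metis rangeI)
  have E: "0 \<in> range (ev a)" by (metis ev_0 rangeI)
  have F: "1 \<in> range (ev a)" by (metis ev_1 rangeI)
  show ?thesis unfolding real_subfield_def using A B C D E F by blast
qed

lemma adjoin_sub_range: "rat_adjoin a \<subseteq> range (ev a)"
  by (rule rat_adjoin_least[OF range_ev_sf]) (metis ev_X rangeI)

lemma adjoin_span: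
  assumes "v \<in> rat_adjoin a"
  shows "\<exists>q. (\<forall>i. q i \<in> \<rat>) \<and> v = (\<Sum>i<degree f. q i * a ^ i)"
proof -
  obtain p where vp: "v = ev a p" using assms adjoin_sub_range by auto
  define r where "r = p mod f"
  have "v = ev a r" using vp ev_mod[OF f_root] r_def by simp
  moreover have "degree r < degree f"
    using degree_mod_less[OF f_nz, of p] deg_pos r_def by auto
  ultimately have "v = (\<Sum>i<degree f. of_rat (coeff r i) * a ^ i)" using ev_sum_lt by simp
  then show ?thesis by (intro exI[of _ "\<lambda>i. of_rat (coeff r i)"]) auto
qed

end


locale part = minpoly a f for a f +
  fixes H1 H2 :: "real set"
  assumes un: "H1 \<union> H2 = {x \<in> rat_adjoin a. x > 0}"
    and dj: "H1 \<inter> H2 = {}"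
    and cl1: "add_mult_closed H1" and cl2: "add_mult_closed H2"
    and one_H1: "1 \<in> H1"
    and H2ne: "H2 \<noteq> {}"
begin

abbreviation K where "K \<equiv> rat_adjoin a"

lemma sf: "real_subfield K" by (rule rat_adjoin_sf)
lemma aK: "a \<in> K" by (rule rat_adjoin_a)

lemma K_add: "x \<in> K \<Longrightarrow> y \<in> K \<Longrightarrow> x + y \<in> K" using rsD(3)[OF sf] .
lemma K_diff: "x \<in> K \<Longrightarrow> y \<in> K \<Longrightarrow> x - y \<in> K" using rsD(4)[OF sf] .
lemma K_mult: "x \<in> K \<Longrightarrow> y \<in> K \<Longrightarrow> x * y \<in> K" using rsD(5)[OF sf] .
lemma K_uminus: "x \<in> K \<Longrightarrow> - x \<in> K" using rs_uminus[OF sf] .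
lemma K_Rats: "q \<in> \<rat> \<Longrightarrow> q \<in> K" using rs_Rats[OF sf] .
lemma K_0: "0 \<in> K" using rsD(1)[OF sf] .
lemma K_1: "1 \<in> K" using rsD(2)[OF sf] .

lemma H1D: "x \<in> H1 \<Longrightarrow> x \<in> K \<and> x > 0"
proof -
  assume "x \<in> H1"
  then have "x \<in> H1 \<union> H2" by (rule UnI1)
  then have "x \<in> {x \<in> K. x > 0}" by (simp only: un)
  then show ?thesis by (rule CollectD)
qed
lemma H2D: "x \<in> H2 \<Longrightarrow> x \<in> K \<and> x > 0"
proof -
  assume "x \<in> H2"
  then have "x \<in> H1 \<union> H2" by (rule UnI2)
  then have "x \<in> {x \<in> K. x > 0}" by (simp only: un)
  then show ?thesis by (rule CollectD)
qed
lemma cls: "x \<in> K \<Longrightarrow> x > 0 \<Longrightarrow> x \<in> H1 \<or> x \<in> H2"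
proof -
  assume "x \<in> K" "x > 0"
  then have "x \<in> {x \<in> K. x > 0}" by simp
  then have "x \<in> H1 \<union> H2" by (simp only: un)
  then show ?thesis by (rule UnE) auto
qed
lemma dis: "x \<in> H1 \<Longrightarrow> x \<in> H2 \<Longrightarrow> False"
proof -
  assume "x \<in> H1" "x \<in> H2"
  then have "x \<in> H1 \<inter> H2" by (rule IntI)
  then show False by (simp only: dj) simp
qed

lemma add1: "x \<in> H1 \<Longrightarrow> y \<in> H1 \<Longrightarrow> x + y \<in> H1" using cl1 unfolding add_mult_closed_def by blast
lemma mul1: "x \<in> H1 \<Longrightarrow> y \<in> H1 \<Longrightarrow> x * y \<in> H1" using cl1 unfolding add_mult_closed_def by blast
lemma add2: "x \<in> H2 \<Longrightarrow> y \<in> H2 \<Longrightarrow> x + y \<in> H2" using cl2 unfolding add_mult_closed_def by blast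
lemma mul2: "x \<in> H2 \<Longrightarrow> y \<in> H2 \<Longrightarrow> x * y \<in> H2" using cl2 unfolding add_mult_closed_def by blast

lemma natm1: "x \<in> H1 \<Longrightarrow> k > 0 \<Longrightarrow> real k * x \<in> H1"
proof (induction k)
  case 0 then show ?case by simp
next
  case (Suc k)
  show ?case
  proof (cases "k = 0")
    case True then show ?thesis using Suc.prems by simp
  next
    case False
    then have "real k * x \<in> H1" using Suc by simp
    then have "real k * x + x \<in> H1" using Suc.prems(1) by (rule add1)
    moreover have "real k * x + x = real (Suc k) * x" by (simp add: distrib_right)
    ultimately show ?thesis by simp
  qed
qed

lemma natm2: "x \<in> H2 \<Longrightarrow> k > 0 \<Longrightarrow> real k * x \<in> H2"
proof (induction k)
  case 0 then show ?case by simp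
next
  case (Suc k)
  show ?case
  proof (cases "k = 0")
    case True then show ?thesis using Suc.prems by simp
  next
    case False
    then have "real k * x \<in> H2" using Suc by simp
    then have "real k * x + x \<in> H2" using Suc.prems(1) by (rule add2)
    moreover have "real k * x + x = real (Suc k) * x" by (simp add: distrib_right)
    ultimately show ?thesis by simp
  qed
qed

lemma rat_nat_repr:
  assumes "q \<in> \<rat>" "q > 0"
  obtains m k :: nat where "m > 0" "k > 0" "q = real m / real k"
proof -
  from assms(1) obtain i j :: int where ij: "j > 0" "q = of_int i / of_int j"
    by (elim Rats_cases') blast
  then have "i > 0" using assms(2) by (simp add: zero_less_divide_iff)
  then show ?thesis using that[of "nat i" "nat j"] ij by simp
qed

lemma rat_H1: "q \<in> \<rat> \<Longrightarrow> q > 0 \<Longrightarrow> q \<in> H1"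
proof -
  assume q: "q \<in> \<rat>" "q > 0"
  obtain m k :: nat where mk: "m > 0" "k > 0" "q = real m / real k" by (rule rat_nat_repr[OF q])
  have "q \<in> H1 \<or> q \<in> H2" using cls K_Rats q by blast
  moreover have False if "q \<in> H2"
  proof -
    have A: "real k * q \<in> H2" using natm2[OF that mk(2)] .
    have "real k * q = real m * 1" using mk by simp
    with A have "real m * 1 \<in> H2" by simp
    moreover have "real m * 1 \<in> H1" using natm1[OF one_H1 mk(1)] .
    ultimately show False using dis by blast
  qed
  ultimately show ?thesis by blast
qed

lemma scale1: "x \<in> H1 \<Longrightarrow> q \<in> \<rat> \<Longrightarrow> q > 0 \<Longrightarrow> q * x \<in> H1"
proof -
  assume x: "x \<in> H1" and q: "q \<in> \<rat>" "q > 0"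
  obtain m k :: nat where mk: "m > 0" "k > 0" "q = real m / real k" by (rule rat_nat_repr[OF q])
  have "q * x \<in> K" "q * x > 0" using x q H1D K_mult K_Rats by auto
  then have "q * x \<in> H1 \<or> q * x \<in> H2" using cls by blast
  moreover have False if "q * x \<in> H2"
  proof -
    have A: "real k * (q * x) \<in> H2" using natm2[OF that mk(2)] .
    have "real k * (q * x) = real m * x" using mk by simp
    with A have "real m * x \<in> H2" by simp
    moreover have "real m * x \<in> H1" using natm1[OF x mk(1)] .
    ultimately show False using dis by blast
  qed
  ultimately show ?thesis by blast
qed

lemma scale2: "x \<in> H2 \<Longrightarrow> q \<in> \<rat> \<Longrightarrow> q > 0 \<Longrightarrow> q * x \<in> H2"
proof -
  assume x: "x \<in> H2" and q: "q \<in> \<rat>" "q > 0"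
  obtain m k :: nat where mk: "m > 0" "k > 0" "q = real m / real k" by (rule rat_nat_repr[OF q])
  have "q * x \<in> K" "q * x > 0" using x q H2D K_mult K_Rats by auto
  then have "q * x \<in> H1 \<or> q * x \<in> H2" using cls by blast
  moreover have False if "q * x \<in> H1"
  proof -
    have A: "real k * (q * x) \<in> H1" using natm1[OF that mk(2)] .
    have "real k * (q * x) = real m * x" using mk by simp
    with A have "real m * x \<in> H1" by simp
    moreover have "real m * x \<in> H2" using natm2[OF x mk(1)] .
    ultimately show False using dis by blast
  qed
  ultimately show ?thesis by blast
qed

lemma mix1: "u \<in> H1 \<Longrightarrow> y \<in> H2 \<Longrightarrow> u > y \<Longrightarrow> u - y \<in> H1"
proof -
  assume u: "u \<in> H1" and y: "y \<in> H2" and "u > y"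
  then have "u - y \<in> K" "u - y > 0" using H1D H2D K_diff by auto
  then have "u - y \<in> H1 \<or> u - y \<in> H2" using cls by blast
  moreover have False if "u - y \<in> H2"
    using add2[OF that y] u dis by simp
  ultimately show ?thesis by blast
qed

lemma mix2: "u \<in> H1 \<Longrightarrow> y \<in> H2 \<Longrightarrow> u < y \<Longrightarrow> y - u \<in> H2"
proof -
  assume u: "u \<in> H1" and y: "y \<in> H2" and "u < y"
  then have "y - u \<in> K" "y - u > 0" using H1D H2D K_diff by auto
  then have "y - u \<in> H1 \<or> y - u \<in> H2" using cls by blast
  moreover have False if "y - u \<in> H1"
    using add1[OF that u] y dis by simp
  ultimately show ?thesis by blast
qed

section \<open>The induced order\<close>

definition nn :: "real \<Rightarrow> bool" where
  "nn v \<longleftrightarrow> v = 0 \<or> (v > 0 \<and> v \<in> H1) \<or> (v < 0 \<and> - v \<in> H2)"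

definition pos :: "real \<Rightarrow> bool" where
  "pos v \<longleftrightarrow> nn v \<and> v \<noteq> 0"

lemma nnI0: "nn 0" unfolding nn_def by blast
lemma nnI1: "v > 0 \<Longrightarrow> v \<in> H1 \<Longrightarrow> nn v" unfolding nn_def by blast
lemma nnI2: "v < 0 \<Longrightarrow> - v \<in> H2 \<Longrightarrow> nn v" unfolding nn_def by blast
lemma nnE: "nn v \<Longrightarrow> (v = 0 \<Longrightarrow> P) \<Longrightarrow> (v > 0 \<Longrightarrow> v \<in> H1 \<Longrightarrow> P) \<Longrightarrow> (v < 0 \<Longrightarrow> - v \<in> H2 \<Longrightarrow> P) \<Longrightarrow> P"
  unfolding nn_def by blast

lemma nn_mixed: assumes p: "p > 0" "p \<in> H1" and q: "q < 0" "- q \<in> H2" shows "nn (p + q)"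
proof -
  consider "p + q > 0" | "p + q = 0" | "p + q < 0" by linarith
  then show ?thesis
  proof cases
    case 1
    then have "p > - q" by linarith
    then have "p - (- q) \<in> H1" by (rule mix1[OF p(2) q(2)])
    then have "p + q \<in> H1" by simp
    then show ?thesis using 1 by (rule nnI1[rotated])
  next
    case 2 then show ?thesis using nnI0 by simp
  next
    case 3
    then have "p < - q" by linarith
    then have "(- q) - p \<in> H2" by (rule mix2[OF p(2) q(2)])
    moreover have "(- q) - p = - (p + q)" by simp
    ultimately have "- (p + q) \<in> H2" by simp
    then show ?thesis using 3 by (rule nnI2[rotated])
  qed
qed

lemma nn_add: "nn v \<Longrightarrow> nn w \<Longrightarrow> nn (v + w)"
proof -
  assume v: "nn v" and w: "nn w"
  show ?thesis
  proof (rule nnE[OF v])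
    assume "v = 0" then show ?thesis using w by simp
  next
    assume v1: "v > 0" "v \<in> H1"
    show ?thesis
    proof (rule nnE[OF w])
      assume "w = 0" then show ?thesis using v by simp
    next
      assume "w > 0" "w \<in> H1"
      then show ?thesis using v1 add1 by (intro nnI1) auto
    next
      assume "w < 0" "- w \<in> H2"
      then show ?thesis using nn_mixed v1 by blast
    qed
  next
    assume v2: "v < 0" "- v \<in> H2"
    show ?thesis
    proof (rule nnE[OF w])
      assume "w = 0" then show ?thesis using v by simp
    next
      assume "w > 0" "w \<in> H1"
      then show ?thesis using nn_mixed[of w v] v2 by (simp add: add.commute)
    next
      assume w2: "w < 0" "- w \<in> H2"
      have "(- v) + (- w) \<in> H2" using v2 w2 add2 by blast
      then have "- (v + w) \<in> H2" by simp
      then show ?thesis using v2 w2 by (intro nnI2) auto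
    qed
  qed
qed

lemma nn_total: "v \<in> K \<Longrightarrow> nn v \<or> nn (- v)"
proof -
  assume v: "v \<in> K"
  consider "v > 0" | "v = 0" | "v < 0" by linarith
  then show ?thesis
  proof cases
    case 1
    then have "v \<in> H1 \<or> v \<in> H2" using cls v by blast
    then show ?thesis
    proof
      assume "v \<in> H1" then show ?thesis using 1 unfolding nn_def by blast
    next
      assume "v \<in> H2"
      then have "nn (- v)" using 1 unfolding nn_def by simp
      then show ?thesis by blast
    qed
  next
    case 2 then show ?thesis unfolding nn_def by blast
  next
    case 3
    then have "- v \<in> H1 \<or> - v \<in> H2" using cls K_uminus v by simp
    then show ?thesis
    proof
      assume "- v \<in> H1" then show ?thesis using 3 unfolding nn_def by simp
    next
      assume "- v \<in> H2" then show ?thesis using 3 unfolding nn_def by blast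
    qed
  qed
qed

lemma nn_anti: "nn v \<Longrightarrow> nn (- v) \<Longrightarrow> v = 0"
proof (rule ccontr)
  assume a: "nn v" "nn (- v)" "v \<noteq> 0"
  show False
  proof (cases "v > 0")
    case True
    then have "v \<in> H1" using a(1,3) unfolding nn_def by simp
    moreover have "v \<in> H2" using a(2) True unfolding nn_def by simp
    ultimately show False using dis by blast
  next
    case False
    then have "v < 0" using a(3) by simp
    then have "- v \<in> H2" using a(1) unfolding nn_def by simp
    moreover have "- v \<in> H1" using a(2) \<open>v < 0\<close> unfolding nn_def by simp
    ultimately show False using dis by blast
  qed
qed

lemma nn_scale: "q \<in> \<rat> \<Longrightarrow> q \<ge> 0 \<Longrightarrow> nn v \<Longrightarrow> nn (q * v)"
proof -
  assume q: "q \<in> \<rat>" "q \<ge> 0" and v: "nn v"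
  show "nn (q * v)"
  proof (cases "q = 0")
    case True then show ?thesis unfolding nn_def by simp
  next
    case False
    then have qp: "q > 0" using q by simp
    consider (v0) "v = 0" | (v1) "v > 0" "v \<in> H1" | (v2) "v < 0" "- v \<in> H2"
      using v unfolding nn_def by blast
    then show ?thesis
    proof cases
      case v0 then show ?thesis unfolding nn_def by simp
    next
      case v1
      then have "q * v \<in> H1" "q * v > 0" using scale1 q(1) qp by auto
      then show ?thesis unfolding nn_def by blast
    next
      case v2
      have "q * (- v) \<in> H2" using scale2[OF v2(2) q(1) qp] .
      moreover have "q * v < 0" using qp v2(1) by (simp add: mult_pos_neg)
      moreover have "q * (- v) = - (q * v)" by simp
      ultimately show ?thesis unfolding nn_def by simp
    qed
  qed
qed

lemma nn_1: "nn 1" unfolding nn_def using one_H1 by simp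

lemma nn_rat: "q \<in> \<rat> \<Longrightarrow> q \<ge> 0 \<Longrightarrow> nn q"
  using nn_scale[OF _ _ nn_1] by simp

lemma nn_0: "nn 0" unfolding nn_def by simp

lemma pos_add: assumes "pos v" "nn w" shows "pos (v + w)"
proof -
  have v: "nn v" "v \<noteq> 0" using assms(1) unfolding pos_def by auto
  have "nn (v + w)" using nn_add v(1) assms(2) by blast
  moreover have "v + w \<noteq> 0"
  proof
    assume "v + w = 0"
    then have "w = - v" by linarith
    then show False using nn_anti[of v] v assms(2) by simp
  qed
  ultimately show ?thesis unfolding pos_def by simp
qed

lemma pos_anti: "pos v \<Longrightarrow> nn (- v) \<Longrightarrow> False"
  unfolding pos_def using nn_anti by blast

lemma pos_anti2: assumes "pos v" "nn w" "w = - v" shows False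
  using pos_anti[OF assms(1)] assms(2,3) by simp

lemma nn_sum: "finite I \<Longrightarrow> (\<And>i. i \<in> I \<Longrightarrow> nn (g i)) \<Longrightarrow> nn (sum g I)"
  by (induction I rule: finite_induct) (auto intro: nn_add nn_0)

lemma K_sum: "finite I \<Longrightarrow> (\<And>i. i \<in> I \<Longrightarrow> g i \<in> K) \<Longrightarrow> sum g I \<in> K"
  by (induction I rule: finite_induct) (auto intro: K_add K_0)

end


context part
begin

section \<open>A top element\<close>

definition ab :: "real \<Rightarrow> real" where "ab v = (if nn v then v else - v)"

lemma ab_nn: "v \<in> K \<Longrightarrow> nn (ab v)"
  unfolding ab_def using nn_total by auto

lemma ab_K: "v \<in> K \<Longrightarrow> ab v \<in> K"
  unfolding ab_def using K_uminus by auto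

lemma ab_cases: "v = ab v \<or> v = - ab v"
  unfolding ab_def by auto

definition e :: real where "e = 1 + (\<Sum>i<degree f. ab (a ^ i))"

lemma powK: "a ^ i \<in> K" using rs_power[OF sf aK] .

lemma eK: "e \<in> K"
  unfolding e_def by (intro K_add K_1 K_sum ab_K powK) auto

lemma e_nn_sum: "nn (\<Sum>i<degree f. ab (a ^ i))"
  by (intro nn_sum ab_nn powK) auto

lemma e_pos: "pos e"
proof -
  have "pos 1" unfolding pos_def using nn_1 by simp
  then show ?thesis unfolding e_def using pos_add e_nn_sum by blast
qed

lemma pos_scale: "q \<in> \<rat> \<Longrightarrow> q > 0 \<Longrightarrow> pos v \<Longrightarrow> pos (q * v)"
  unfolding pos_def using nn_scale by auto

lemma Rats_abs: "(q::real) \<in> \<rat> \<Longrightarrow> \<bar>q\<bar> \<in> \<rat>"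
  by (cases "q \<ge> 0") auto

lemma bound:
  assumes v: "v \<in> K"
  shows "\<exists>N. N \<in> \<rat> \<and> nn (N * e - v) \<and> nn (N * e + v)"
proof -
  obtain q where q: "\<And>i. q i \<in> \<rat>" and vq: "v = (\<Sum>i<degree f. q i * a ^ i)"
    using adjoin_span[OF v] by blast
  define N where "N = 1 + (\<Sum>i<degree f. \<bar>q i\<bar>)"
  have NQ: "N \<in> \<rat>" unfolding N_def using q Rats_abs by (intro Rats_add Rats_sum) auto
  have Nge: "N \<ge> \<bar>q i\<bar>" if "i < degree f" for i
  proof -
    have "\<bar>q i\<bar> \<le> (\<Sum>i<degree f. \<bar>q i\<bar>)"
      using that by (intro member_le_sum) auto
    then show ?thesis unfolding N_def by simp
  qed
  have main: "nn (N * e + s * v)" if s: "s = 1 \<or> s = -1" for s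
  proof -
    have "N * e + s * v = N * 1 + (\<Sum>i<degree f. N * ab (a ^ i) + s * (q i * a ^ i))"
      unfolding e_def vq by (simp add: algebra_simps sum.distrib sum_distrib_left)
    moreover have "nn (N * ab (a ^ i) + s * (q i * a ^ i))" if i: "i < degree f" for i
    proof -
      have "\<exists>t. (t = 1 \<or> t = -1) \<and> a ^ i = t * ab (a ^ i)"
      proof (cases "a ^ i = ab (a ^ i)")
        case True then show ?thesis by (intro exI[of _ 1]) simp
      next
        case False
        then have "a ^ i = - ab (a ^ i)" using ab_cases by blast
        then show ?thesis by (intro exI[of _ "-1"]) simp
      qed
      then obtain t where t: "t = 1 \<or> t = -1" "a ^ i = t * ab (a ^ i)" by blast
      have eq: "N * ab (a ^ i) + s * (q i * a ^ i) = (N + s * t * q i) * ab (a ^ i)"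
        by (subst t(2)) (simp add: algebra_simps)
      have "N + s * t * q i \<ge> 0" using Nge[OF i] s t(1) by auto
      moreover have "N + s * t * q i \<in> \<rat>" using NQ q s t(1) by auto
      ultimately have "nn ((N + s * t * q i) * ab (a ^ i))"
        using nn_scale ab_nn[OF powK] by blast
      then show ?thesis unfolding eq .
    qed
    then have "nn (\<Sum>i<degree f. N * ab (a ^ i) + s * (q i * a ^ i))" by (intro nn_sum) auto
    moreover have "nn (N * 1)"
    proof -
      have "N \<ge> 0" unfolding N_def by (simp add: sum_nonneg add_nonneg_nonneg)
      then show ?thesis using nn_rat NQ by simp
    qed
    ultimately show ?thesis using nn_add by auto
  qed
  show ?thesis using main[of 1] main[of "-1"] NQ by auto
qed

section \<open>The functional\<close>

definition T :: "real \<Rightarrow> real set" where "T v = {r. r \<in> \<rat> \<and> nn (v - r * e)}"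
definition L :: "real \<Rightarrow> real" where "L v = Sup (T v)"

lemma e_nz: "e \<noteq> 0" using e_pos unfolding pos_def by simp

lemma T_props:
  assumes v: "v \<in> K"
  shows "T v \<noteq> {}" "bdd_above (T v)"
proof -
  obtain N where N: "N \<in> \<rat>" "nn (N * e - v)" "nn (N * e + v)" using bound[OF v] by blast
  have "- N \<in> T v" unfolding T_def using N by (simp add: add.commute)
  then show "T v \<noteq> {}" by blast
  have "r \<le> N" if "r \<in> T v" for r
  proof (rule ccontr)
    assume "\<not> r \<le> N"
    then have rN: "r - N > 0" by simp
    have r: "r \<in> \<rat>" "nn (v - r * e)" using that unfolding T_def by auto
    have "nn ((v - r * e) + (N * e - v))" using nn_add r N by blast
    moreover have "(v - r * e) + (N * e - v) = - ((r - N) * e)" by (simp add: algebra_simps)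
    moreover have "pos ((r - N) * e)" using pos_scale[OF _ rN e_pos] r N by auto
    ultimately show False using pos_anti2[of "(r - N) * e" "(v - r * e) + (N * e - v)"] by blast
  qed
  then show "bdd_above (T v)" by (intro bdd_aboveI) 
qed

lemma L_le: "v \<in> K \<Longrightarrow> r \<in> \<rat> \<Longrightarrow> nn (v - r * e) \<Longrightarrow> r \<le> L v"
  unfolding L_def using T_props by (intro cSup_upper) (auto simp: T_def)

lemma L_lt: "v \<in> K \<Longrightarrow> r \<in> \<rat> \<Longrightarrow> r < L v \<Longrightarrow> pos (v - r * e)"
proof -
  assume v: "v \<in> K" and r: "r \<in> \<rat>" "r < L v"
  then obtain r' where r': "r' \<in> T v" "r < r'"
    unfolding L_def using less_cSup_iff[OF T_props] by blast
  have "pos ((r' - r) * e)" using pos_scale[OF _ _ e_pos] r r' unfolding T_def by auto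
  moreover have "nn (v - r' * e)" using r' unfolding T_def by auto
  ultimately have "pos ((r' - r) * e + (v - r' * e))" using pos_add by blast
  moreover have "(r' - r) * e + (v - r' * e) = v - r * e" by (simp add: algebra_simps)
  ultimately show ?thesis by simp
qed

lemma L_gt: "v \<in> K \<Longrightarrow> r \<in> \<rat> \<Longrightarrow> L v < r \<Longrightarrow> pos (r * e - v)"
proof -
  assume v: "v \<in> K" and r: "r \<in> \<rat>" "L v < r"
  have "\<not> nn (v - r * e)"
  proof
    assume "nn (v - r * e)"
    then have "r \<le> L v" by (rule L_le[OF v r(1)])
    then show False using r(2) by simp
  qed
  moreover have "v - r * e \<in> K" using v r eK K_diff K_mult K_Rats by blast
  ultimately have "nn (- (v - r * e))" using nn_total by blast
  moreover have "- (v - r * e) = r * e - v" by simp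
  moreover have "r * e - v \<noteq> 0" using \<open>\<not> nn (v - r * e)\<close> nn_0 by auto
  ultimately show ?thesis unfolding pos_def by simp
qed

lemma L_add: assumes v: "v \<in> K" and w: "w \<in> K" shows "L (v + w) = L v + L w"
proof (rule ccontr)
  assume ne: "L (v + w) \<noteq> L v + L w"
  have vw: "v + w \<in> K" using K_add v w by blast
  show False
  proof (cases "L (v + w) < L v + L w")
    case True
    define d where "d = (L v + L w - L (v + w)) / 2"
    have d: "d > 0" using True d_def by simp
    obtain r1 where r1: "r1 \<in> \<rat>" "L v - d < r1" "r1 < L v"
      using Rats_dense_in_real[of "L v - d" "L v"] d by auto
    obtain r2 where r2: "r2 \<in> \<rat>" "L w - d < r2" "r2 < L w"
      using Rats_dense_in_real[of "L w - d" "L w"] d by auto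
    have "nn (v - r1 * e)" "nn (w - r2 * e)" using L_lt v w r1 r2 unfolding pos_def by auto
    then have "nn ((v - r1 * e) + (w - r2 * e))" using nn_add by blast
    moreover have "(v - r1 * e) + (w - r2 * e) = (v + w) - (r1 + r2) * e" by (simp add: algebra_simps)
    ultimately have "r1 + r2 \<le> L (v + w)" using L_le[OF vw] r1 r2 by auto
    moreover have "2 * d = L v + L w - L (v + w)" using d_def by simp
    ultimately show False using r1 r2 by linarith
  next
    case False
    then have gt: "L (v + w) > L v + L w" using ne by simp
    define d where "d = (L (v + w) - L v - L w) / 2"
    have d: "d > 0" using gt d_def by simp
    obtain r1 where r1: "r1 \<in> \<rat>" "L v < r1" "r1 < L v + d"
      using Rats_dense_in_real[of "L v" "L v + d"] d by auto
    obtain r2 where r2: "r2 \<in> \<rat>" "L w < r2" "r2 < L w + d"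
      using Rats_dense_in_real[of "L w" "L w + d"] d by auto
    have "pos (r1 * e - v)" "pos (r2 * e - w)" using L_gt v w r1 r2 by auto
    then have "pos ((r1 * e - v) + (r2 * e - w))" using pos_add unfolding pos_def by blast
    moreover have "(r1 * e - v) + (r2 * e - w) = - ((v + w) - (r1 + r2) * e)" by (simp add: algebra_simps)
    moreover have "pos ((v + w) - (r1 + r2) * e)"
    proof -
      have "r1 + r2 \<in> \<rat>" using r1 r2 by simp
      moreover have "2 * d = L (v + w) - L v - L w" using d_def by simp
      then have "r1 + r2 < L (v + w)" using r1 r2 by linarith
      ultimately show ?thesis using L_lt[OF vw] by blast
    qed
    ultimately show False
      using pos_anti2[of "(v + w) - (r1 + r2) * e" "(r1 * e - v) + (r2 * e - w)"] unfolding pos_def by blast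
  qed
qed

lemma L_0: "L 0 = 0"
  using L_add[OF K_0 K_0] by simp

lemma L_uminus: "v \<in> K \<Longrightarrow> L (- v) = - L v"
  using L_add[of v "- v"] K_uminus L_0 by simp

lemma L_diff: "v \<in> K \<Longrightarrow> w \<in> K \<Longrightarrow> L (v - w) = L v - L w"
  using L_add[of v "- w"] K_uminus L_uminus by simp

lemma L_nat: "v \<in> K \<Longrightarrow> L (real k * v) = real k * L v"
proof (induction k)
  case 0 then show ?case by (simp add: L_0)
next
  case (Suc k)
  have "real (Suc k) * v = real k * v + v" by (simp add: algebra_simps)
  moreover have "real k * v \<in> K" using Suc K_mult rs_nat[OF sf] by blast
  ultimately show ?case using L_add Suc by (simp add: algebra_simps)
qed

lemma L_int: assumes v: "v \<in> K" shows "L (real_of_int k * v) = real_of_int k * L v"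
proof (cases "k \<ge> 0")
  case True
  then show ?thesis using L_nat[OF v, of "nat k"] by simp
next
  case False
  have kv: "real_of_int k * v \<in> K" using v K_mult K_Rats by simp
  have e1: "L (- (real_of_int k * v)) = - L (real_of_int k * v)" by (rule L_uminus[OF kv])
  have e2: "- (real_of_int k * v) = real (nat (- k)) * v" using False by simp
  have e3: "L (real (nat (- k)) * v) = real (nat (- k)) * L v" by (rule L_nat[OF v])
  have e4: "real (nat (- k)) = - real_of_int k" using False by simp
  have "L (real_of_int k * v) = - L (- (real_of_int k * v))" using e1 by simp
  also have "\<dots> = - L (real (nat (- k)) * v)" by (simp only: e2)
  also have "\<dots> = - (real (nat (- k)) * L v)" by (simp only: e3)
  also have "\<dots> = real_of_int k * L v" using e4 by simp
  finally show ?thesis .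
qed

lemma L_rat: assumes q: "q \<in> \<rat>" and v: "v \<in> K" shows "L (q * v) = q * L v"
proof -
  obtain i j :: int where ij: "j > 0" "q = of_int i / of_int j" using q by (elim Rats_cases') blast
  have qv: "q * v \<in> K" using q v K_mult K_Rats by blast
  have "real_of_int j * L (q * v) = L (real_of_int j * (q * v))" using L_int[OF qv] by simp
  also have "real_of_int j * (q * v) = real_of_int i * v" using ij by simp
  also have "L (real_of_int i * v) = real_of_int i * L v" using L_int[OF v] by simp
  finally have h: "real_of_int j * L (q * v) = real_of_int i * L v" .
  have "real_of_int i = q * real_of_int j" using ij by simp
  then have "real_of_int j * L (q * v) = real_of_int j * (q * L v)" using h by (simp add: algebra_simps)
  then show ?thesis using ij(1) by simp
qed

lemma L_e: "L e = 1"
proof (rule ccontr)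
  assume ne: "L e \<noteq> 1"
  show False
  proof (cases "L e < 1")
    case True
    obtain r where r: "r \<in> \<rat>" "L e < r" "r < 1" using Rats_dense_in_real[OF True] by blast
    have "pos (r * e - e)" using L_gt[OF eK r(1,2)] .
    moreover have "r * e - e = - ((1 - r) * e)" by (simp add: algebra_simps)
    moreover have "pos ((1 - r) * e)" using pos_scale[OF _ _ e_pos] r by auto
    ultimately show False using pos_anti2[of "(1 - r) * e" "r * e - e"] unfolding pos_def by blast
  next
    case False
    then have "1 < L e" using ne by simp
    then obtain r where r: "r \<in> \<rat>" "1 < r" "r < L e" using Rats_dense_in_real by blast
    have "pos (e - r * e)" using L_lt[OF eK r(1,3)] .
    moreover have "e - r * e = - ((r - 1) * e)" by (simp add: algebra_simps)
    moreover have "pos ((r - 1) * e)" using pos_scale[OF _ _ e_pos] r by auto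
    ultimately show False using pos_anti2[of "(r - 1) * e" "e - r * e"] unfolding pos_def by blast
  qed
qed

lemma L_nn: "v \<in> K \<Longrightarrow> nn v \<Longrightarrow> L v \<ge> 0"
  using L_le[of v 0] by simp

lemma L_H1: "v \<in> H1 \<Longrightarrow> L v \<ge> 0"
  using L_nn H1D unfolding nn_def by auto

lemma L_H2: "v \<in> H2 \<Longrightarrow> L v \<le> 0"
proof -
  assume v: "v \<in> H2"
  then have "nn (- v)" using H2D unfolding nn_def by auto
  then have "L (- v) \<ge> 0" using L_nn K_uminus H2D v by blast
  then show ?thesis using L_uminus H2D v by simp
qed

lemma to_H1: assumes "v \<in> K" "v > 0" "L v > 0" shows "v \<in> H1"
proof -
  have "v \<in> H1 \<or> v \<in> H2" using cls assms(1,2) by blast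
  moreover have "v \<notin> H2" using L_H2 assms(3) by fastforce
  ultimately show ?thesis by blast
qed

lemma to_H2: assumes "v \<in> K" "v > 0" "L v < 0" shows "v \<in> H2"
proof -
  have "v \<in> H1 \<or> v \<in> H2" using cls assms(1,2) by blast
  moreover have "v \<notin> H1" using L_H1 assms(3) by fastforce
  ultimately show ?thesis by blast
qed

lemma sq1: "v \<in> K \<Longrightarrow> v > 0 \<Longrightarrow> L v > 0 \<Longrightarrow> L (v * v) \<ge> 0"
  using to_H1 mul1 L_H1 by blast

lemma sq2: "v \<in> K \<Longrightarrow> v > 0 \<Longrightarrow> L v < 0 \<Longrightarrow> L (v * v) \<le> 0"
  using to_H2 mul2 L_H2 by blast

end


context part
begin

definition c :: real where "c = L 1"

lemma c_nn: "c \<ge> 0" unfolding c_def using L_H1 one_H1 by blast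

lemma L_shift:
  assumes r: "r \<in> \<rat>" and w: "w \<in> K"
  shows "L (r + w) = r * c + L w"
    "L ((r + w) * (r + w)) = r * r * c + 2 * r * L w + L (w * w)"
    "L (r - w) = r * c - L w"
    "L ((r - w) * (r - w)) = r * r * c - 2 * r * L w + L (w * w)"
proof -
  have r1: "r * 1 \<in> K" "r \<in> K" using K_Rats r by auto
  have ww: "w * w \<in> K" using K_mult w by blast
  have rr: "r * r \<in> \<rat>" "2 * r \<in> \<rat>" using r by auto
  have Lr: "L r = r * c" using L_rat[OF r K_1] unfolding c_def by simp
  show "L (r + w) = r * c + L w" using L_add[OF r1(2) w] Lr by simp
  show "L (r - w) = r * c - L w" using L_diff[OF r1(2) w] Lr by simp
  have e1: "(r + w) * (r + w) = (r * r) * 1 + ((2 * r) * w + w * w)" by (simp add: algebra_simps)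
  have e2: "(r - w) * (r - w) = (r * r) * 1 + (w * w - (2 * r) * w)" by (simp add: algebra_simps)
  have K1: "(r * r) * 1 \<in> K" "(2 * r) * w \<in> K" using rr K_Rats K_mult w by auto
  show "L ((r + w) * (r + w)) = r * r * c + 2 * r * L w + L (w * w)"
    unfolding e1 using L_add K_add K1 ww L_rat[OF rr(1) K_1] L_rat[OF rr(2) w] unfolding c_def
    by (simp add: algebra_simps)
  have K2: "w * w - (2 * r) * w \<in> K" using K_diff ww K1(2) by blast
  have "L ((r * r) * 1 + (w * w - (2 * r) * w)) = L ((r * r) * 1) + L (w * w - (2 * r) * w)"
    by (rule L_add[OF K1(1) K2])
  also have "L (w * w - (2 * r) * w) = L (w * w) - L ((2 * r) * w)"
    by (rule L_diff[OF ww K1(2)])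
  also have "L ((r * r) * 1) = r * r * c" using L_rat[OF rr(1) K_1] unfolding c_def by simp
  also have "L ((2 * r) * w) = 2 * r * L w" using L_rat[OF rr(2) w] by simp
  finally show "L ((r - w) * (r - w)) = r * r * c - 2 * r * L w + L (w * w)"
    unfolding e2 by simp
qed

lemma A1:
  assumes cpos: "c > 0" and w: "w \<in> K"
  shows "L w - c * w \<ge> 0"
proof (rule ccontr)
  assume "\<not> L w - c * w \<ge> 0"
  define x where "x = L w - c * w"
  have x: "x < 0" using \<open>\<not> L w - c * w \<ge> 0\<close> x_def by simp
  define u0 where "u0 = - x / c"
  have u0: "u0 > 0" using divide_neg_pos[OF x cpos] u0_def by simp
  define M where "M = L (w * w)"
  define m where "m = c * w * w - 2 * w * L w + M"
  define d where "d = m - c * u0 * u0"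
  have Lw: "L w = c * w - c * u0" using cpos unfolding x_def u0_def by (simp add: field_simps)
  have key: "L z = c * (u - u0)" "L (z * z) = c * (u - u0) * (u - u0) + d" "z \<in> K"
    if r: "r \<in> \<rat>" and z: "z = r + w" and u: "u = r + w" for r z u
  proof -
    have h1: "L z = r * c + L w" unfolding z by (rule L_shift(1)[OF r w])
    have h2: "L (z * z) = r * r * c + 2 * r * L w + L (w * w)" unfolding z by (rule L_shift(2)[OF r w])
    show "L z = c * (u - u0)" unfolding h1 Lw u by (simp add: algebra_simps)
    show "L (z * z) = c * (u - u0) * (u - u0) + d"
      unfolding h2 d_def m_def M_def Lw u by (simp add: algebra_simps)
    show "z \<in> K" using z K_add K_Rats r w by blast
  qed
  show False
  proof (cases "d < 0")
    case True
    define \<delta> where "\<delta> = min 1 (- d / (2 * c))"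
    have \<delta>: "\<delta> > 0" "\<delta> \<le> 1" "c * \<delta> \<le> - d / 2" using True cpos \<delta>_def by (auto simp: field_simps min_def)
    obtain r where r: "r \<in> \<rat>" "u0 - w < r" "r < u0 + \<delta> - w"
      using Rats_dense_in_real[of "u0 - w" "u0 + \<delta> - w"] \<delta> by auto
    define u where "u = r + w"
    have u: "u0 < u" "u < u0 + \<delta>" using r u_def by auto
    have "L (u * u) \<ge> 0"
      using sq1[of u] key[OF r(1) u_def u_def] u u0 cpos by (auto intro: mult_pos_pos)
    moreover have "c * (u - u0) * (u - u0) \<le> c * (u - u0)"
    proof -
      have "u - u0 \<le> 1" using u \<delta> by linarith
      moreover have "0 \<le> c * (u - u0)" using u cpos by simp
      ultimately have "c * (u - u0) * (u - u0) \<le> c * (u - u0) * 1" by (rule mult_left_mono)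
      then show ?thesis by simp
    qed
    moreover have "c * (u - u0) < c * \<delta>" using u cpos by simp
    ultimately show False using key(2)[OF r(1) u_def u_def] \<delta> True by linarith
  next
    case False
    obtain r where r: "r \<in> \<rat>" "- w < r" "r < u0 - w"
      using Rats_dense_in_real[of "- w" "u0 - w"] u0 by auto
    define u where "u = r + w"
    have u: "0 < u" "u < u0" using r u_def by auto
    have "L (u * u) \<le> 0"
      using sq2[of u] key[OF r(1) u_def u_def] u cpos by (auto simp: mult_pos_neg)
    moreover have "c * (u - u0) * (u - u0) > 0"
    proof -
      have "c * (u - u0) < 0" using u cpos by (simp add: mult_pos_neg)
      moreover have "u - u0 < 0" using u by simp
      ultimately show ?thesis by (rule mult_neg_neg)
    qed
    ultimately show False using key(2)[OF r(1) u_def u_def] False by linarith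
  qed
qed

lemma c_zero: "c = 0"
proof (rule ccontr)
  assume "c \<noteq> 0"
  then have cpos: "c > 0" using c_nn by simp
  obtain y where y: "y \<in> H2" using H2ne by blast
  have yK: "y \<in> K" "y > 0" using H2D y by auto
  have "L y - c * y \<ge> 0" using A1[OF cpos yK(1)] .
  moreover have "L y \<le> 0" using L_H2 y .
  moreover have "c * y > 0" using cpos yK by simp
  ultimately show False by linarith
qed

lemma B1:
  assumes w: "w \<in> K" and xpos: "L w > 0"
  shows "L (w * w) = 2 * w * L w"
proof -
  define x where "x = L w"
  define m where "m = L (w * w) - 2 * w * x"
  have k1: "L (r + w) = x" "L ((r + w) * (r + w)) = 2 * (r + w) * x + m" if r: "r \<in> \<rat>" for r
    using L_shift(1,2)[OF r w] c_zero x_def m_def by (auto simp: algebra_simps)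
  have k2: "L (r - w) = - x" "L ((r - w) * (r - w)) = - 2 * (r - w) * x + m" if r: "r \<in> \<rat>" for r
    using L_shift(3,4)[OF r w] c_zero x_def m_def by (auto simp: algebra_simps)
  have x: "x > 0" using xpos x_def by simp
  have "\<not> m < 0"
  proof
    assume m: "m < 0"
    obtain r where r: "r \<in> \<rat>" "- w < r" "r < - m / (2 * x) - w"
      using Rats_dense_in_real[of "- w" "- m / (2 * x) - w"] divide_pos_pos[of "- m" "2 * x"] m x by auto
    have rwK: "r + w \<in> K" using K_add K_Rats r w by blast
    have "L ((r + w) * (r + w)) \<ge> 0" using sq1[OF rwK] k1(1)[OF r(1)] r x by auto
    moreover have "2 * (r + w) * x < - m"
    proof -
      have "r + w < - m / (2 * x)" using r by simp
      then have "(r + w) * (2 * x) < - m" using pos_less_divide_eq[of "2 * x" "r + w" "- m"] x by simp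
      then show ?thesis by (simp add: algebra_simps)
    qed
    ultimately show False using k1(2)[OF r(1)] by linarith
  qed
  moreover have "\<not> m > 0"
  proof
    assume m: "m > 0"
    obtain r where r: "r \<in> \<rat>" "w < r" "r < m / (2 * x) + w"
      using Rats_dense_in_real[of "w" "m / (2 * x) + w"] divide_pos_pos[of m "2 * x"] m x by auto
    have rwK: "r - w \<in> K" using K_diff K_Rats r w by blast
    have "L ((r - w) * (r - w)) \<le> 0" using sq2[OF rwK] k2(1)[OF r(1)] r x by auto
    moreover have "2 * (r - w) * x < m"
    proof -
      have "r - w < m / (2 * x)" using r by simp
      then have "(r - w) * (2 * x) < m" using pos_less_divide_eq[of "2 * x" "r - w" m] x by simp
      then show ?thesis by (simp add: algebra_simps)
    qed
    ultimately show False using k2(2)[OF r(1)] by linarith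
  qed
  ultimately show ?thesis using m_def x_def by simp
qed

lemma B2:
  assumes w: "w \<in> K"
  shows "L (w * w) = 2 * w * L w"
proof -
  have sq_neg: "L (v * v) = 2 * v * L v" if v: "v \<in> K" "L v \<noteq> 0" for v
  proof (cases "L v > 0")
    case True then show ?thesis using B1 v by blast
  next
    case False
    then have "L (- v) > 0" using L_uminus v by simp
    then have "L ((- v) * (- v)) = 2 * (- v) * L (- v)" using B1 K_uminus v by blast
    then show ?thesis using L_uminus v by simp
  qed
  show ?thesis
  proof (cases "L w = 0")
    case False then show ?thesis using sq_neg w by blast
  next
    case True
    have eK': "e \<in> K" by (rule eK)
    have we: "w + e \<in> K" "w - e \<in> K" "w * w \<in> K" "w * e \<in> K" "e * e \<in> K" "2 * (w * e) \<in> K"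
      using K_add K_diff K_mult w eK K_Rats[of 2] by auto
    have Lwe: "L (w + e) = 1" "L (w - e) = -1" using L_add L_diff w eK L_e True by auto
    have ee: "L (e * e) = 2 * e" using sq_neg[OF eK'] L_e by simp
    have p: "L ((w + e) * (w + e)) = 2 * (w + e)" using sq_neg[OF we(1)] Lwe by simp
    have q: "L ((w - e) * (w - e)) = - 2 * (w - e)" using sq_neg[OF we(2)] Lwe by simp
    have e1: "(w + e) * (w + e) = w * w + (2 * (w * e) + e * e)" by (simp add: algebra_simps)
    have e2: "(w - e) * (w - e) = w * w + (e * e - 2 * (w * e))" by (simp add: algebra_simps)
    have "L ((w + e) * (w + e)) = L (w * w) + (L (2 * (w * e)) + L (e * e))"
      unfolding e1 using L_add we K_add by simp
    moreover have "L ((w - e) * (w - e)) = L (w * w) + (L (e * e) - L (2 * (w * e)))"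
      unfolding e2 using L_add L_diff we K_diff by simp
    ultimately have s1: "L (w * w) + (L (2 * (w * e)) + L (e * e)) = 2 * w + 2 * e"
      and s2: "L (w * w) + (L (e * e) - L (2 * (w * e))) = - 2 * w + 2 * e"
      using p q by (simp_all add: algebra_simps)
    have "L (w * w) = 0" using s1 s2 ee by linarith
    then show ?thesis using True by simp
  qed
qed

lemma leibniz:
  assumes v: "v \<in> K" and w: "w \<in> K"
  shows "L (v * w) = v * L w + w * L v"
proof -
  have K3: "v * v \<in> K" "w * w \<in> K" "v * w \<in> K" "v + w \<in> K" using K_mult K_add v w by auto
  have "(v + w) * (v + w) = v * v + (2 * (v * w) + w * w)" by (simp add: algebra_simps)
  then have "L ((v + w) * (v + w)) = L (v * v) + (2 * L (v * w) + L (w * w))"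
    using L_add L_rat[of 2 "v * w"] K3 K_add K_mult K_Rats[of 2] by simp
  moreover have "L ((v + w) * (v + w)) = 2 * (v + w) * L (v + w)" using B2 K3 by blast
  ultimately show ?thesis using B2 v w L_add by (simp add: algebra_simps)
qed

lemma L_ev: "L (ev a p) = ev a (pderiv p) * L a"
proof (induction p)
  case 0 then show ?case by (simp add: L_0)
next
  case (pCons r p)
  have rK: "of_rat r \<in> K" using K_Rats by simp
  have pK: "ev a p \<in> K" using ev_in_sf[OF sf aK] .
  have apK: "a * ev a p \<in> K" using K_mult aK pK by blast
  have "L (ev a (pCons r p)) = L (of_rat r * 1) + L (a * ev a p)"
    using L_add[OF _ apK, of "of_rat r"] rK by simp
  also have "L (of_rat r * 1) = 0" using L_rat[of "of_rat r" 1] K_1 c_zero unfolding c_def by simp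
  also have "L (a * ev a p) = a * L (ev a p) + ev a p * L a" using leibniz aK pK by blast
  finally show ?case using pCons.IH by (simp add: ev_pderiv_pCons algebra_simps)
qed

lemma La: "L a = 0"
proof -
  have "L (ev a f) = 0" using f_root L_0 by simp
  then show ?thesis using L_ev[of f] pderiv_nz by simp
qed

lemma final: False
proof -
  define N where "N = {z \<in> K. L z = 0}"
  have "real_subfield N"
    unfolding real_subfield_def N_def
  proof (intro conjI ballI impI)
    show "0 \<in> {z \<in> K. L z = 0}" using K_0 L_0 by simp
    show "1 \<in> {z \<in> K. L z = 0}" using K_1 c_zero unfolding c_def by simp
  next
    fix x y assume x: "x \<in> {z \<in> K. L z = 0}" and y: "y \<in> {z \<in> K. L z = 0}"
    then show "x + y \<in> {z \<in> K. L z = 0}" using K_add L_add by simp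
    from x y show "x - y \<in> {z \<in> K. L z = 0}" using K_diff L_diff by simp
    from x y show "x * y \<in> {z \<in> K. L z = 0}" using K_mult leibniz by simp
  next
    fix x assume x: "x \<in> {z \<in> K. L z = 0}" and nz: "x \<noteq> 0"
    have iK: "inverse x \<in> K" using x nz rsD(6)[OF sf] by simp
    have "L (x * inverse x) = x * L (inverse x) + inverse x * L x" using leibniz x iK by simp
    moreover have "L (x * inverse x) = 0" using nz c_zero unfolding c_def by simp
    ultimately have "L (inverse x) = 0" using x nz by simp
    then show "inverse x \<in> {z \<in> K. L z = 0}" using iK by simp
  qed
  moreover have "a \<in> N" using aK La N_def by simp
  ultimately have "K \<subseteq> N" by (rule rat_adjoin_least)
  then have "L e = 0" using eK N_def by auto
  then show False using L_e by simp
qed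

end

theorem theorem1p2:
  fixes a :: real
  assumes "algebraic a"
  shows "\<not> (\<exists>H1 H2. H1 \<noteq> {} \<and> H2 \<noteq> {} \<and> H1 \<inter> H2 = {} \<and>
            H1 \<union> H2 = {x \<in> rat_adjoin a. x > 0} \<and>
            add_mult_closed H1 \<and> add_mult_closed H2)"
proof
  assume "\<exists>H1 H2. H1 \<noteq> {} \<and> H2 \<noteq> {} \<and> H1 \<inter> H2 = {} \<and>
            H1 \<union> H2 = {x \<in> rat_adjoin a. x > 0} \<and>
            add_mult_closed H1 \<and> add_mult_closed H2"
  then obtain H1 H2 where H: "H1 \<noteq> {}" "H2 \<noteq> {}" "H1 \<inter> H2 = {}"
    "H1 \<union> H2 = {x \<in> rat_adjoin a. x > 0}" "add_mult_closed H1" "add_mult_closed H2" by blast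
  obtain f where f: "f \<noteq> 0" "ev a f = 0" "\<And>g. g \<noteq> 0 \<Longrightarrow> ev a g = 0 \<Longrightarrow> degree f \<le> degree g"
    using minpoly_exists[OF assms] by blast
  have "1 \<in> rat_adjoin a" using rsD(2)[OF rat_adjoin_sf] .
  then have "1 \<in> {x \<in> rat_adjoin a. x > 0}" by simp
  then have "1 \<in> H1 \<union> H2" by (simp only: H(4))
  then have d: "1 \<in> H1 \<or> 1 \<in> H2" by blast
  have m: "minpoly a f" unfolding minpoly_def using f by blast
  have H4': "H2 \<union> H1 = {x \<in> rat_adjoin a. x > 0}" using H(4) by (simp only: Un_commute)
  have H3': "H2 \<inter> H1 = {}" using H(3) by (simp only: Int_commute)
  from d show False
  proof
    assume "1 \<in> H1"
    have "part_axioms a H1 H2" unfolding part_axioms_def using H \<open>1 \<in> H1\<close> by blast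
    with m have "part a f H1 H2" by (rule part.intro)
    then show False by (rule part.final)
  next
    assume "1 \<in> H2"
    have "part_axioms a H2 H1" unfolding part_axioms_def using H H4' H3' \<open>1 \<in> H2\<close> by blast
    with m have "part a f H2 H1" by (rule part.intro)
    then show False by (rule part.final)
  qed
qed

end
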